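(* Assume the first $i-1$ layers have been quantized and let $X^{(i-1)},\widetilde X^{(i-1)}\in\mathbb R^{m\times N_{i-1}}$ be the resulting activations (probabilities are conditional on these). Let $p,K^{(i)}\in\mathbb N$ with $p\ge3$ and $\delta>0$. Quantize $W^{(i)}$ using Algorithm 1 with alphabet $\mathcal A=\mathcal A_{K^{(i)}}^\delta$, and suppose the matrix $\widetilde W^{(i)}$ whose $j$-th column is the aligned vector $\widetilde w$ obtained from $w=W^{(i)}_j$ satisfies $\|\widetilde W^{(i)}\|_{\max}\le\frac12K^{(i)}\delta$. Then $$\max_{1\le j\le N_i}\|X^{(i-1)}W^{(i)}_j-\widetilde X^{(i-1)}Q^{(i)}_j\|_2\le\delta\sqrt{2\pi pm\log N_{i-1}}\max_{1\le j\le N_{i-1}}\|\widetilde X^{(i-1)}_j\|_2$$ holds with probability at least $$1-\frac{\sqrt2 mN_i}{N_{i-1}^p}-\sqrt2N_i\sum_{t=2}^{N_{i-1}}\exp\Bigl(-\frac{(K^{(i)})^2\|\widetilde X_t^{(i-1)}\|_2^2}{8\pi\max_{1\le j\le t-1}\|\widetilde X_j^{(i-1)}\|_2^2}\Bigr).$$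
   Context: $\rho(x)=\max\{0,x\}$; $X^{(0)}=\widetilde X^{(0)}=X$, $X^{(i)}=\rho(X^{(i-1)}W^{(i)})$, $\widetilde X^{(i)}=\rho(\widetilde X^{(i-1)}Q^{(i)})$, where $W^{(i)}\in\mathbb R^{N_{i-1}\times N_i}$ are the weights and $Q^{(i)}$ the quantized weights. $A_j$ is the $j$-th column of $A$; $\|A\|_{\max}=\max|A_{kl}|$; columns of $\widetilde X^{(i-1)}$ are nonzero. $\mathcal A_K^\delta=\{k\delta:k\in\mathbb Z,|k|\le K\}$. The stochastic quantizer for $\mathcal A_K^\delta$: if $|z|\le K\delta$, $\mathcal Q_{\mathrm{StocQ}}(z)$ equals $\lfloor z/\delta\rfloor\delta$ with probability $1-z/\delta+\lfloor z/\delta\rfloor$ and $(\lfloor z/\delta\rfloor+1)\delta$ otherwise; if $z>K\delta$ it is $K\delta$, if $z<-K\delta$ it is $-K\delta$; each call uses fresh independent randomness. Algorithm 1 for layer $i$: for each column $w=W^{(i)}_j$, let $\widetilde w$ minimize $\|z\|_\infty$ subject to $\widetilde X^{(i-1)}z=X^{(i-1)}w$; then with $\widetilde Y=\widetilde X^{(i-1)}$, $N=N_{i-1}$, run $\widetilde u_0=0$, $\widetilde q_t=\mathcal Q_{\mathrm{StocQ}}(\widetilde w_t+\langle\widetilde Y_t,\widetilde u_{t-1}\rangle/\|\widetilde Y_t\|_2^2)$, $\widetilde u_t=\widetilde u_{t-1}+(\widetilde w_t-\widetilde q_t)\widetilde Y_t$ for $t=1,\dots,N$, and set $Q^{(i)}_j=\widetilde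 q$. *)

theory Defs
  imports "HOL-Probability.Probability_Mass_Function"
begin

text \<open>Conventions: an m x n real matrix A is a function nat => nat => real,
  A k t = entry in row k (k < m), column t (t < n); indices are 0-based.
  Vectors of length n are functions nat => real used on indices < n.\<close>

definition alphabet :: "nat \<Rightarrow> real \<Rightarrow> real set" where
  "alphabet K \<delta> = {real_of_int k * \<delta> | k. \<bar>k\<bar> \<le> int K}"

definition stocq :: "nat \<Rightarrow> real \<Rightarrow> real \<Rightarrow> real pmf" where
  "stocq K \<delta> z =
     (if \<bar>z\<bar> \<le> real K * \<delta> then
        map_pmf (\<lambda>b. if b then (real_of_int \<lfloor>z / \<delta>\<rfloor> + 1) * \<delta>
                           else real_of_int \<lfloor>z / \<delta>\<rfloor> * \<delta>)
                (bernoulli_pmf (z / \<delta> - real_of_int \<lfloor>z / \<delta>\<rfloor>))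
      else if z > real K * \<delta> then return_pmf (real K * \<delta>)
      else return_pmf (- (real K * \<delta>)))"

definition col_sqnorm :: "nat \<Rightarrow> (nat \<Rightarrow> nat \<Rightarrow> real) \<Rightarrow> nat \<Rightarrow> real" where
  "col_sqnorm m Y t = (\<Sum>k<m. (Y k t)\<^sup>2)"

definition col_norm :: "nat \<Rightarrow> (nat \<Rightarrow> nat \<Rightarrow> real) \<Rightarrow> nat \<Rightarrow> real" where
  "col_norm m Y t = sqrt (col_sqnorm m Y t)"

definition inf_norm :: "nat \<Rightarrow> (nat \<Rightarrow> real) \<Rightarrow> real" where
  "inf_norm N z = Max ((\<lambda>t. \<bar>z t\<bar>) ` {..<N})"

definition is_aligned :: "nat \<Rightarrow> nat \<Rightarrow> (nat \<Rightarrow> nat \<Rightarrow> real) \<Rightarrow> (nat \<Rightarrow> nat \<Rightarrow> real)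
    \<Rightarrow> (nat \<Rightarrow> real) \<Rightarrow> (nat \<Rightarrow> real) \<Rightarrow> bool" where
  "is_aligned m N X Xt w wt \<longleftrightarrow>
     (\<forall>k<m. (\<Sum>t<N. Xt k t * wt t) = (\<Sum>t<N. X k t * w t)) \<and>
     (\<forall>z. (\<forall>k<m. (\<Sum>t<N. Xt k t * z t) = (\<Sum>t<N. X k t * w t))
            \<longrightarrow> inf_norm N wt \<le> inf_norm N z)"

text \<open>One step (step t+1 in 1-based numbering) of the stochastic path-following
  loop of Algorithm 1: state = (u_{t}, [q_1,...,q_t]).\<close>
definition stoc_step :: "nat \<Rightarrow> (nat \<Rightarrow> nat \<Rightarrow> real) \<Rightarrow> nat \<Rightarrow> real \<Rightarrow> (nat \<Rightarrow> real) \<Rightarrow> nat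
    \<Rightarrow> (nat \<Rightarrow> real) \<times> real list \<Rightarrow> ((nat \<Rightarrow> real) \<times> real list) pmf" where
  "stoc_step m Y K \<delta> w t = (\<lambda>(u, qs).
     map_pmf (\<lambda>q. (\<lambda>k. u k + (w t - q) * Y k t, qs @ [q]))
       (stocq K \<delta> (w t + (\<Sum>k<m. Y k t * u k) / col_sqnorm m Y t)))"

fun col_run :: "nat \<Rightarrow> (nat \<Rightarrow> nat \<Rightarrow> real) \<Rightarrow> nat \<Rightarrow> real \<Rightarrow> (nat \<Rightarrow> real) \<Rightarrow> nat
    \<Rightarrow> ((nat \<Rightarrow> real) \<times> real list) pmf" where
  "col_run m Y K \<delta> w 0 = return_pmf ((\<lambda>_. 0), [])"
| "col_run m Y K \<delta> w (Suc t) = bind_pmf (col_run m Y K \<delta> w t) (stoc_step m Y K \<delta> w t)"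

text \<open>Distribution of the quantized column q (a list of length N) produced from the
  aligned vector w with Y = Xt (m x N).\<close>
definition quantize_column :: "nat \<Rightarrow> nat \<Rightarrow> (nat \<Rightarrow> nat \<Rightarrow> real) \<Rightarrow> nat \<Rightarrow> real
    \<Rightarrow> (nat \<Rightarrow> real) \<Rightarrow> real list pmf" where
  "quantize_column m N Y K \<delta> w = map_pmf snd (col_run m Y K \<delta> w N)"

text \<open>Distribution of Q^(i) as the list of its columns; the columns j = 0,1,...
  are quantized one after another with fresh independent randomness;
  Wt t j is the aligned matrix.\<close>
fun layer_run :: "nat \<Rightarrow> nat \<Rightarrow> (nat \<Rightarrow> nat \<Rightarrow> real) \<Rightarrow> nat \<Rightarrow> real
    \<Rightarrow> (nat \<Rightarrow> nat \<Rightarrow> real) \<Rightarrow> nat \<Rightarrow> real list list pmf" where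
  "layer_run m N Y K \<delta> Wt 0 = return_pmf []"
| "layer_run m N Y K \<delta> Wt (Suc j) =
     bind_pmf (layer_run m N Y K \<delta> Wt j)
       (\<lambda>Qs. map_pmf (\<lambda>q. Qs @ [q]) (quantize_column m N Y K \<delta> (\<lambda>t. Wt t j)))"

end

theory Submission
  imports Defs "HOL-Probability.Hoeffding"
begin

lemma two_point:
  fixes r h :: real assumes "0 \<le> r" "r \<le> 1"
  shows "r * exp (h*(r-1)) + (1-r)*exp(h*r) \<le> exp (h\<^sup>2/8)"
proof (cases "h \<ge> 0")
  case True
  define p where "p = 1 - r"
  have p: "p \<ge> 0" using assms p_def by simp
  have pos: "1 + p * (exp h - 1) > 0"
    using p True by (intro add_pos_nonneg mult_nonneg_nonneg) auto
  have L: "-h * p + ln (1 + p * (exp h - 1)) \<le> h\<^sup>2/8"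
    using Hoeffdings_lemma_aux[OF True p] by simp
  have "r * exp (h*(r-1)) + (1-r)*exp(h*r) = exp (-h * p) * (1 + p * (exp h - 1))"
    by (simp add: p_def algebra_simps flip: exp_add)
  also have "\<dots> = exp (-h * p + ln (1 + p * (exp h - 1)))"
    by (subst exp_add) (use pos in simp)
  also have "\<dots> \<le> exp (h\<^sup>2/8)" using L by simp
  finally show ?thesis .
next
  case False
  define g where "g = - h"
  have g: "g \<ge> 0" using False g_def by simp
  have pos: "1 + r * (exp g - 1) > 0"
    using assms g by (intro add_pos_nonneg mult_nonneg_nonneg) auto
  have L: "-g * r + ln (1 + r * (exp g - 1)) \<le> g\<^sup>2/8"
    using Hoeffdings_lemma_aux[OF g assms(1)] by simp
  have "r * exp (h*(r-1)) + (1-r)*exp(h*r) = exp (-g * r) * (1 + r * (exp g - 1))"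
    by (simp add: g_def algebra_simps flip: exp_add)
  also have "\<dots> = exp (-g * r + ln (1 + r * (exp g - 1)))"
    by (subst exp_add) (use pos in simp)
  also have "\<dots> \<le> exp (h\<^sup>2/8)" using L by (simp add: g_def)
  finally show ?thesis .
qed

lemma exp_half_ln2: "exp (- (ln 2 / 2)) = 1 / sqrt (2::real)"
proof -
  have "exp (ln 2/2) = exp ((1/2) * ln (2::real))" by simp
  also have "\<dots> = (2::real) powr (1/2)" unfolding powr_def by simp
  also have "\<dots> = sqrt 2" by (rule powr_half_sqrt) simp
  finally have e: "exp (ln 2/2) = sqrt (2::real)" .
  show ?thesis unfolding exp_minus e by (simp add: inverse_eq_divide)
qed

lemma alg1:
  fixes a :: real assumes "a \<ge> ln 2 / 2"
  shows "2 * exp (-(4*pi*a)) \<le> sqrt 2 * exp (-a)"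
proof -
  have "ln 2 > (0::real)" by simp
  have a0: "a \<ge> 0" using assms \<open>ln 2 > 0\<close> by linarith
  have "(4*pi - 1) * a \<ge> 1 * a" using a0 pi_gt3
    by (intro mult_right_mono) auto
  hence h: "(4*pi - 1) * a \<ge> ln 2 / 2" using assms by linarith
  have "exp (-((4*pi-1)*a)) \<le> exp (- (ln 2 / 2))" using h by simp
  also have "\<dots> = 1 / sqrt 2" by (rule exp_half_ln2)
  finally have e1: "exp (-((4*pi-1)*a)) \<le> 1 / sqrt 2" .
  have "2 * exp (-(4*pi*a)) = 2 * (exp (-((4*pi-1)*a)) * exp (-a))"
    unfolding exp_add[symmetric] by (simp add: algebra_simps)
  also have "\<dots> \<le> 2 * ((1 / sqrt 2) * exp (-a))"
    using e1 by (intro mult_left_mono mult_right_mono) auto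
  also have "\<dots> = sqrt 2 * exp (-a)"
  proof -
    have "sqrt 2 * sqrt 2 = (2::real)" by simp
    thus ?thesis by (simp add: field_simps)
  qed
  finally show ?thesis .
qed


lemma alg2:
  fixes M sq V a :: real
  assumes "M \<ge> 0" "sq > 0" "a\<^sup>2 \<le> V * sq"
  shows "M * (V - a\<^sup>2 / sq) + a\<^sup>2 \<le> max M sq * V"
proof (cases "sq \<le> M")
  case True
  have "M * (a\<^sup>2/sq) \<ge> sq * (a\<^sup>2/sq)" using True assms by (intro mult_right_mono) auto
  also have "sq * (a\<^sup>2/sq) = a\<^sup>2" using assms by simp
  finally show ?thesis using True by (simp add: algebra_simps max_def)
next
  case False
  have "a\<^sup>2 * (1 - M/sq) \<le> V * sq * (1 - M/sq)"
    using False assms by (intro mult_right_mono) (auto simp: field_simps)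
  also have "V * sq * (1 - M/sq) = V * sq - V * M" using assms by (simp add: field_simps)
  finally have "a\<^sup>2 * (1 - M/sq) \<le> V * sq - V * M" .
  moreover have "M * (V - a\<^sup>2 / sq) + a\<^sup>2 = M * V + a\<^sup>2 * (1 - M/sq)" by (simp add: algebra_simps)
  ultimately show ?thesis using False by (simp add: max_def algebra_simps)
qed



definition ip :: "nat \<Rightarrow> (nat \<Rightarrow> real) \<Rightarrow> (nat \<Rightarrow> real) \<Rightarrow> real" where
  "ip m v u = (\<Sum>k<m. v k * u k)"

lemma ip_add_right: "ip m v (\<lambda>k. u k + c * y k) = ip m v u + c * ip m v y"
  by (simp add: ip_def algebra_simps sum.distrib sum_distrib_left)

lemma ip_diff_left: "ip m (\<lambda>k. v k - c * y k) u = ip m v u - c * ip m y u"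
  by (simp add: ip_def algebra_simps sum_subtractf sum_distrib_left)

lemma ip_comm: "ip m v u = ip m u v"
  by (simp add: ip_def mult.commute)

lemma ip_zero: "ip m v (\<lambda>_. 0) = 0"
  by (simp add: ip_def)

lemma ip_self_nonneg: "ip m v v \<ge> 0"
  by (simp add: ip_def sum_nonneg)

lemma ip_cs: "(ip m v y)\<^sup>2 \<le> ip m v v * ip m y y"
  using Cauchy_Schwarz_ineq_sum[of v y "{..<m}"] by (simp add: ip_def power2_eq_square)

context
  fixes m :: nat and Y :: "nat \<Rightarrow> nat \<Rightarrow> real" and K :: nat and \<delta> :: real and w :: "nat \<Rightarrow> real"
begin

definition zval :: "(nat \<Rightarrow> real) \<Rightarrow> nat \<Rightarrow> real" where
  "zval u t = w t + (\<Sum>k<m. Y k t * u k) / col_sqnorm m Y t"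

definition okk :: "(nat \<Rightarrow> real) \<Rightarrow> nat \<Rightarrow> bool" where
  "okk u t \<longleftrightarrow> \<bar>zval u t\<bar> \<le> real K * \<delta>"

fun run2 :: "nat \<Rightarrow> ((nat \<Rightarrow> real) \<times> real list \<times> bool) pmf" where
  "run2 0 = return_pmf ((\<lambda>_. 0), [], True)"
| "run2 (Suc t) = bind_pmf (run2 t) (\<lambda>(u, qs, b).
      map_pmf (\<lambda>(u', qs'). (u', qs', b \<and> okk u t)) (stoc_step m Y K \<delta> w t (u, qs)))"

lemma run2_map: "map_pmf (\<lambda>(u, qs, b). (u, qs)) (run2 t) = col_run m Y K \<delta> w t"
proof (induction t)
  case 0
  then show ?case by simp
next
  case (Suc t)
  have "map_pmf (\<lambda>(u, qs, b). (u, qs)) (run2 (Suc t)) =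
        bind_pmf (run2 t) (\<lambda>x. stoc_step m Y K \<delta> w t ((\<lambda>(u, qs, b). (u, qs)) x))"
    unfolding run2.simps map_bind_pmf
    by (intro bind_pmf_cong refl) (auto simp: map_pmf_comp case_prod_beta cong: map_pmf_cong)
  also have "\<dots> = bind_pmf (map_pmf (\<lambda>(u, qs, b). (u, qs)) (run2 t)) (stoc_step m Y K \<delta> w t)"
    by (simp add: bind_map_pmf)
  finally show ?case using Suc by simp
qed

lemma run2_supp:
  "x \<in> set_pmf (run2 t) \<Longrightarrow> length (fst (snd x)) = t \<and>
     (\<forall>k. fst x k = (\<Sum>s<t. (w s - fst (snd x) ! s) * Y k s))"
proof (induction t arbitrary: x)
  case 0
  then show ?case by simp
next
  case (Suc t)
  from Suc.prems obtain u qs b q where x: "(u, qs, b) \<in> set_pmf (run2 t)"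
    and xe: "x = ((\<lambda>k. u k + (w t - q) * Y k t), qs @ [q], b \<and> okk u t)"
    by (auto simp: stoc_step_def)
  from Suc.IH[OF x] have l: "length qs = t" and uu: "\<forall>k. u k = (\<Sum>s<t. (w s - qs ! s) * Y k s)" by auto
  have "(\<Sum>s<t. (w s - (qs @ [q]) ! s) * Y k s) = (\<Sum>s<t. (w s - qs ! s) * Y k s)" for k
    by (intro sum.cong) (auto simp: nth_append l)
  then show ?case using l uu by (simp add: xe nth_append)
qed


lemma step_ident:
  assumes sq: "col_sqnorm m Y t > 0"
  shows "ip m v (\<lambda>k. u k + (w t - q) * Y k t) =
         ip m (\<lambda>k. v k - ip m v (\<lambda>k. Y k t) / col_sqnorm m Y t * Y k t) u
         + (zval u t - q) * ip m v (\<lambda>k. Y k t)"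
proof -
  have e: "(\<Sum>k<m. Y k t * u k) = ip m (\<lambda>k. Y k t) u" by (simp add: ip_def)
  show ?thesis
    unfolding ip_add_right ip_diff_left zval_def e
    using sq by (simp add: field_simps)
qed

lemma step_bound:
  assumes d: "\<delta> > 0" and sq: "col_sqnorm m Y t > 0" and ok: "okk u t"
  shows "(\<integral>\<^sup>+q. ennreal (exp (s * ip m v (\<lambda>k. u k + (w t - q) * Y k t))) \<partial>stocq K \<delta> (zval u t))
     \<le> ennreal (exp (s * ip m (\<lambda>k. v k - ip m v (\<lambda>k. Y k t) / col_sqnorm m Y t * Y k t) u)
               * exp ((s * ip m v (\<lambda>k. Y k t) * \<delta>)\<^sup>2 / 8))"
proof -
  define z where "z = zval u t"
  define f where "f = real_of_int \<lfloor>z / \<delta>\<rfloor>"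
  define r where "r = z / \<delta> - f"
  define a where "a = ip m v (\<lambda>k. Y k t)"
  define P where "P = ip m (\<lambda>k. v k - a / col_sqnorm m Y t * Y k t) u"
  have r0: "0 \<le> r" and r1: "r \<le> 1" unfolding r_def f_def by linarith+
  have st: "stocq K \<delta> z = map_pmf (\<lambda>b. if b then (f + 1) * \<delta> else f * \<delta>) (bernoulli_pmf r)"
    using ok unfolding stocq_def okk_def z_def f_def r_def by simp
  have idq: "ip m v (\<lambda>k. u k + (w t - q) * Y k t) = P + (z - q) * a" for q
    unfolding P_def a_def z_def by (rule step_ident[OF sq])
  have zf1: "z - (f + 1) * \<delta> = (r - 1) * \<delta>" and zf: "z - f * \<delta> = r * \<delta>"
    unfolding r_def using d by (simp_all add: field_simps)
  have "(\<integral>\<^sup>+q. ennreal (exp (s * ip m v (\<lambda>k. u k + (w t - q) * Y k t))) \<partial>stocq K \<delta> z)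
      = ennreal (exp (s * (P + (r - 1) * \<delta> * a))) * ennreal r
        + ennreal (exp (s * (P + r * \<delta> * a))) * ennreal (1 - r)"
    unfolding st idq using r0 r1 by (simp add: zf1 zf mult.assoc)
  also have "\<dots> = ennreal (exp (s * P) * (r * exp ((s*a*\<delta>) * (r - 1)) + (1 - r) * exp ((s*a*\<delta>) * r)))"
  proof -
    have "ennreal (exp (s * (P + (r - 1) * \<delta> * a))) * ennreal r
        + ennreal (exp (s * (P + r * \<delta> * a))) * ennreal (1 - r)
        = ennreal (exp (s * (P + (r - 1) * \<delta> * a)) * r + exp (s * (P + r * \<delta> * a)) * (1 - r))"
      using r0 r1 by (simp add: ennreal_mult ennreal_plus)
    also have "exp (s * (P + (r - 1) * \<delta> * a)) * r + exp (s * (P + r * \<delta> * a)) * (1 - r)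
       = exp (s * P) * (r * exp ((s*a*\<delta>) * (r - 1)) + (1 - r) * exp ((s*a*\<delta>) * r))"
      by (simp add: algebra_simps flip: exp_add)
    finally show ?thesis .
  qed
  also have "\<dots> \<le> ennreal (exp (s * P) * exp ((s * a * \<delta>)\<^sup>2 / 8))"
    using two_point[OF r0 r1, of "s*a*\<delta>"] by (intro ennreal_leI mult_left_mono) auto
  finally show ?thesis unfolding z_def P_def a_def .
qed


definition MM :: "nat \<Rightarrow> real" where
  "MM T = Max (insert 0 (col_sqnorm m Y ` {..<T}))"

lemma MM_Suc: "MM (Suc T) = max (MM T) (col_sqnorm m Y T)"
  unfolding MM_def lessThan_Suc image_insert insert_commute[of 0 "col_sqnorm m Y T"]
  by (subst Max_insert) (auto simp: max.commute)

lemma MM_nonneg: "MM T \<ge> 0"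
  unfolding MM_def by (intro Max_ge_iff[THEN iffD2]) auto

lemma sqnorm_ip: "col_sqnorm m Y t = ip m (\<lambda>k. Y k t) (\<lambda>k. Y k t)"
  by (simp add: col_sqnorm_def ip_def power2_eq_square)

lemma mgf:
  assumes d: "\<delta> > 0" and pos: "\<forall>t<T. col_sqnorm m Y t > 0"
  shows "\<forall>v. (\<integral>\<^sup>+x. (if snd (snd x) then ennreal (exp (s * ip m v (fst x))) else 0) \<partial>run2 T)
           \<le> ennreal (exp (s\<^sup>2 * \<delta>\<^sup>2 / 8 * MM T * ip m v v))"
  using pos
proof (induction T)
  case 0
  then show ?case by (simp add: ip_zero MM_def)
next
  case (Suc T)
  have sq: "col_sqnorm m Y T > 0" using Suc.prems by simp
  have IH: "\<forall>v. (\<integral>\<^sup>+x. (if snd (snd x) then ennreal (exp (s * ip m v (fst x))) else 0) \<partial>run2 T)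
           \<le> ennreal (exp (s\<^sup>2 * \<delta>\<^sup>2 / 8 * MM T * ip m v v))"
    using Suc by simp
  show ?case
  proof
    fix v
    define a where "a = ip m v (\<lambda>k. Y k T)"
    define sqn where "sqn = col_sqnorm m Y T"
    define Pv where "Pv = (\<lambda>k. v k - a / sqn * Y k T)"
    define c where "c = s\<^sup>2 * \<delta>\<^sup>2 / 8"
    have G: "(\<integral>\<^sup>+y. (if snd (snd y) then ennreal (exp (s * ip m v (fst y))) else 0)
              \<partial>(case x of (u, qs, b) \<Rightarrow> map_pmf (\<lambda>(u', qs'). (u', qs', b \<and> okk u T)) (stoc_step m Y K \<delta> w T (u, qs))))
          \<le> (if snd (snd x) then ennreal (exp (s * ip m Pv (fst x))) else 0) * ennreal (exp ((s * a * \<delta>)\<^sup>2 / 8))"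
      for x
    proof -
      obtain u qs b where x: "x = (u, qs, b)" by (cases x) auto
      show ?thesis
      proof (cases "b \<and> okk u T")
        case True
        have "(\<integral>\<^sup>+y. (if snd (snd y) then ennreal (exp (s * ip m v (fst y))) else 0)
              \<partial>(case x of (u, qs, b) \<Rightarrow> map_pmf (\<lambda>(u', qs'). (u', qs', b \<and> okk u T)) (stoc_step m Y K \<delta> w T (u, qs))))
            = (\<integral>\<^sup>+q. ennreal (exp (s * ip m v (\<lambda>k. u k + (w T - q) * Y k T))) \<partial>stocq K \<delta> (zval u T))"
          using True unfolding x stoc_step_def zval_def by simp
        also have "\<dots> \<le> ennreal (exp (s * ip m Pv u) * exp ((s * a * \<delta>)\<^sup>2 / 8))"
          using step_bound[OF d sq, of u s v] True unfolding Pv_def a_def sqn_def by simp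
        finally show ?thesis using True by (simp add: x ennreal_mult)
      next
        case False
        then show ?thesis unfolding x stoc_step_def by auto
      qed
    qed
    have "(\<integral>\<^sup>+x. (if snd (snd x) then ennreal (exp (s * ip m v (fst x))) else 0) \<partial>run2 (Suc T))
        \<le> (\<integral>\<^sup>+x. (if snd (snd x) then ennreal (exp (s * ip m Pv (fst x))) else 0) * ennreal (exp ((s * a * \<delta>)\<^sup>2 / 8)) \<partial>run2 T)"
      unfolding run2.simps nn_integral_bind_pmf
      by (intro nn_integral_mono G)
    also have "\<dots> = (\<integral>\<^sup>+x. (if snd (snd x) then ennreal (exp (s * ip m Pv (fst x))) else 0) \<partial>run2 T) * ennreal (exp ((s * a * \<delta>)\<^sup>2 / 8))"
      by (rule nn_integral_multc) simp
    also have "\<dots> \<le> ennreal (exp (c * MM T * ip m Pv Pv)) * ennreal (exp ((s * a * \<delta>)\<^sup>2 / 8))"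
      using IH unfolding c_def by (intro mult_right_mono) auto
    also have "\<dots> = ennreal (exp (c * (MM T * ip m Pv Pv + a\<^sup>2)))"
      by (simp add: ennreal_mult[symmetric] c_def power_mult_distrib algebra_simps flip: exp_add)
    also have "\<dots> \<le> ennreal (exp (c * (MM (Suc T) * ip m v v)))"
    proof -
      have ipY: "ip m (\<lambda>k. Y k T) (\<lambda>k. Y k T) = sqn" unfolding sqn_def sqnorm_ip ..
      have "ip m Pv Pv = ip m v v - a\<^sup>2 / sqn"
        unfolding Pv_def ip_diff_left
        apply (subst (1 2) ip_comm)
        unfolding ip_diff_left ipY a_def[symmetric]
        apply (subst ip_comm[of m "\<lambda>k. Y k T" v])
        using sq unfolding sqn_def[symmetric] a_def[symmetric]
        by (simp add: field_simps power2_eq_square)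
      moreover have "a\<^sup>2 \<le> ip m v v * sqn"
        using ip_cs[of m v "\<lambda>k. Y k T"] unfolding a_def ipY .
      ultimately have "MM T * ip m Pv Pv + a\<^sup>2 \<le> MM (Suc T) * ip m v v"
        unfolding MM_Suc sqn_def[symmetric] using alg2[OF MM_nonneg, of sqn a "ip m v v"] sq sqn_def
        by simp
      moreover have "c \<ge> 0" unfolding c_def by simp
      ultimately show ?thesis by (intro ennreal_leI) (simp add: mult_left_mono)
    qed
    finally show "(\<integral>\<^sup>+x. (if snd (snd x) then ennreal (exp (s * ip m v (fst x))) else 0) \<partial>run2 (Suc T))
           \<le> ennreal (exp (s\<^sup>2 * \<delta>\<^sup>2 / 8 * MM (Suc T) * ip m v v))"
      unfolding c_def by (simp add: mult.assoc)
  qed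
qed


lemma emeasure_pmf_le_nn:
  assumes "\<And>x. x \<in> A \<Longrightarrow> 1 \<le> g x"
  shows "emeasure (measure_pmf p) A \<le> (\<integral>\<^sup>+x. g x \<partial>p)"
proof -
  have "emeasure (measure_pmf p) A = (\<integral>\<^sup>+x. indicator A x \<partial>p)" by simp
  also have "\<dots> \<le> (\<integral>\<^sup>+x. g x \<partial>p)"
    using assms by (intro nn_integral_mono) (auto split: split_indicator)
  finally show ?thesis .
qed

lemma chernoff:
  assumes d: "\<delta> > 0" and pos: "\<forall>t<T. col_sqnorm m Y t > 0" and s: "s \<ge> 0"
  shows "emeasure (measure_pmf (run2 T)) {x. snd (snd x) \<and> ip m v (fst x) > \<beta>}
           \<le> ennreal (exp (s\<^sup>2 * \<delta>\<^sup>2 / 8 * MM T * ip m v v - s * \<beta>))"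
proof -
  have "emeasure (measure_pmf (run2 T)) {x. snd (snd x) \<and> ip m v (fst x) > \<beta>}
      \<le> (\<integral>\<^sup>+x. ennreal (exp (- s * \<beta>)) * (if snd (snd x) then ennreal (exp (s * ip m v (fst x))) else 0) \<partial>run2 T)"
  proof (rule emeasure_pmf_le_nn)
    fix x assume x: "x \<in> {x. snd (snd x) \<and> ip m v (fst x) > \<beta>}"
    have "s * \<beta> \<le> s * ip m v (fst x)" using x s by (intro mult_left_mono) auto
    hence "1 \<le> exp (- s * \<beta>) * exp (s * ip m v (fst x))"
      by (simp flip: exp_add)
    thus "1 \<le> ennreal (exp (- s * \<beta>)) * (if snd (snd x) then ennreal (exp (s * ip m v (fst x))) else 0)"
      using x by (simp add: ennreal_mult[symmetric])
  qed
  also have "\<dots> = ennreal (exp (- s * \<beta>)) * (\<integral>\<^sup>+x. (if snd (snd x) then ennreal (exp (s * ip m v (fst x))) else 0) \<partial>run2 T)"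
    by (rule nn_integral_cmult) simp
  also have "\<dots> \<le> ennreal (exp (- s * \<beta>)) * ennreal (exp (s\<^sup>2 * \<delta>\<^sup>2 / 8 * MM T * ip m v v))"
    using mgf[OF d pos] by (intro mult_left_mono) auto
  also have "\<dots> = ennreal (exp (s\<^sup>2 * \<delta>\<^sup>2 / 8 * MM T * ip m v v - s * \<beta>))"
    by (simp add: ennreal_mult[symmetric] flip: exp_add)
  finally show ?thesis .
qed

lemma sat_bound:
  "emeasure (measure_pmf (run2 T)) {x. \<not> snd (snd x)}
     \<le> (\<Sum>t<T. emeasure (measure_pmf (run2 t)) {x. snd (snd x) \<and> \<not> okk (fst x) t})"
proof (induction T)
  case 0
  then show ?case by simp
next
  case (Suc T)
  have G: "(\<integral>\<^sup>+y. indicator {x. \<not> snd (snd x)} y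
              \<partial>(case x of (u, qs, b) \<Rightarrow> map_pmf (\<lambda>(u', qs'). (u', qs', b \<and> okk u T)) (stoc_step m Y K \<delta> w T (u, qs))))
          \<le> indicator {x. \<not> snd (snd x)} x + indicator {x. snd (snd x) \<and> \<not> okk (fst x) T} x" for x
  proof -
    obtain u qs b where x: "x = (u, qs, b)" by (cases x) auto
    have "(\<integral>\<^sup>+y. indicator {x. \<not> snd (snd x)} y
              \<partial>(case x of (u, qs, b) \<Rightarrow> map_pmf (\<lambda>(u', qs'). (u', qs', b \<and> okk u T)) (stoc_step m Y K \<delta> w T (u, qs))))
         = (\<integral>\<^sup>+q. (if b \<and> okk u T then 0 else 1) \<partial>stocq K \<delta> (w T + (\<Sum>k<m. Y k T * u k) / col_sqnorm m Y T))"
      unfolding x stoc_step_def by (simp add: indicator_def)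
    also have "\<dots> = (if b \<and> okk u T then 0 else 1)" by simp
    finally show ?thesis unfolding x by (auto simp: indicator_def)
  qed
  have "emeasure (measure_pmf (run2 (Suc T))) {x. \<not> snd (snd x)}
       = (\<integral>\<^sup>+x. indicator {x. \<not> snd (snd x)} x \<partial>run2 (Suc T))" by simp
  also have "\<dots> \<le> (\<integral>\<^sup>+x. indicator {x. \<not> snd (snd x)} x + indicator {x. snd (snd x) \<and> \<not> okk (fst x) T} x \<partial>run2 T)"
    unfolding run2.simps nn_integral_bind_pmf by (intro nn_integral_mono G)
  also have "\<dots> = emeasure (measure_pmf (run2 T)) {x. \<not> snd (snd x)}
        + emeasure (measure_pmf (run2 T)) {x. snd (snd x) \<and> \<not> okk (fst x) T}"
    by (subst nn_integral_add) auto
  also have "\<dots> \<le> (\<Sum>t<Suc T. emeasure (measure_pmf (run2 t)) {x. snd (snd x) \<and> \<not> okk (fst x) t})"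
    using Suc.IH by (simp add: add_right_mono)
  finally show ?case .
qed


lemma chernoff2:
  assumes d: "\<delta> > 0" and pos: "\<forall>t<T. col_sqnorm m Y t > 0" and b: "\<beta> \<ge> 0"
    and M: "MM T > 0" and V: "ip m v v > 0"
  shows "emeasure (measure_pmf (run2 T)) {x. snd (snd x) \<and> \<bar>ip m v (fst x)\<bar> > \<beta>}
           \<le> ennreal (2 * exp (- (2 * \<beta>\<^sup>2 / (\<delta>\<^sup>2 * MM T * ip m v v))))"
proof -
  define D where "D = \<delta>\<^sup>2 * MM T * ip m v v"
  have D: "D > 0" unfolding D_def using d M V by simp
  define s where "s = 4 * \<beta> / D"
  have s0: "s \<ge> 0" unfolding s_def using D b by simp
  have ex: "s\<^sup>2 * \<delta>\<^sup>2 / 8 * MM T * ip m v v - s * \<beta> = - (2 * \<beta>\<^sup>2 / D)"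
  proof -
    have "s\<^sup>2 * \<delta>\<^sup>2 / 8 * MM T * ip m v v = s\<^sup>2 * D / 8" unfolding D_def by simp
    thus ?thesis unfolding s_def using D by (simp add: field_simps power2_eq_square)
  qed
  have nv: "ip m (\<lambda>i. - v i) u = - ip m v u" for u by (simp add: ip_def sum_negf)
  have nvv: "ip m (\<lambda>i. - v i) (\<lambda>i. - v i) = ip m v v" by (simp add: ip_def)
  have seteq: "{x. snd (snd x) \<and> \<bar>ip m v (fst x)\<bar> > \<beta>} =
        {x. snd (snd x) \<and> ip m v (fst x) > \<beta>} \<union> {x. snd (snd x) \<and> ip m (\<lambda>i. - v i) (fst x) > \<beta>}"
    unfolding nv by auto
  hence "emeasure (measure_pmf (run2 T)) {x. snd (snd x) \<and> \<bar>ip m v (fst x)\<bar> > \<beta>}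
      \<le> emeasure (measure_pmf (run2 T)) {x. snd (snd x) \<and> ip m v (fst x) > \<beta>}
        + emeasure (measure_pmf (run2 T)) {x. snd (snd x) \<and> ip m (\<lambda>i. - v i) (fst x) > \<beta>}"
    by (subst seteq) (rule emeasure_subadditive; simp)
  also have "\<dots> \<le> ennreal (exp (- (2 * \<beta>\<^sup>2 / D))) + ennreal (exp (- (2 * \<beta>\<^sup>2 / D)))"
    using chernoff[OF d pos s0, where v=v and \<beta>=\<beta>] chernoff[OF d pos s0, where v="\<lambda>i. - v i" and \<beta>=\<beta>]
    unfolding nvv ex by (intro add_mono) auto
  also have "\<dots> = ennreal (2 * exp (- (2 * \<beta>\<^sup>2 / D)))"
    by (simp add: ennreal_plus[symmetric] del: ennreal_plus)
  finally show ?thesis unfolding D_def .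
qed


lemma MM_pos: "0 < T \<Longrightarrow> col_sqnorm m Y 0 > 0 \<Longrightarrow> MM T > 0"
  unfolding MM_def by (rule Max_gr_iff[THEN iffD2]) auto

lemma MM_eq: "0 < T \<Longrightarrow> MM T = Max (col_sqnorm m Y ` {..<T})"
proof -
  assume T: "0 < T"
  have ne: "col_sqnorm m Y ` {..<T} \<noteq> {}" using T by auto
  have "Max (col_sqnorm m Y ` {..<T}) \<ge> col_sqnorm m Y 0"
    using T by (intro Max_ge) auto
  moreover have "col_sqnorm m Y 0 \<ge> 0" by (simp add: col_sqnorm_def sum_nonneg)
  ultimately show ?thesis unfolding MM_def using ne by (subst Max_insert) auto
qed

lemma sat_term:
  assumes d: "\<delta> > 0" and t1: "t \<ge> 1" and pos: "\<forall>t'\<le>t. col_sqnorm m Y t' > 0"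
    and wb: "\<bar>w t\<bar> \<le> real K * \<delta> / 2"
    and small: "sqrt 2 * exp (- ((real K)\<^sup>2 * col_sqnorm m Y t) / (8 * pi * Max (col_sqnorm m Y ` {..<t}))) < 1"
  shows "emeasure (measure_pmf (run2 t)) {x. snd (snd x) \<and> \<not> okk (fst x) t}
     \<le> ennreal (sqrt 2 * exp (- ((real K)\<^sup>2 * col_sqnorm m Y t) / (8 * pi * Max (col_sqnorm m Y ` {..<t}))))"
proof -
  define sq where "sq = col_sqnorm m Y t"
  have sq: "sq > 0" using pos sq_def by simp
  define \<beta> where "\<beta> = real K * \<delta> * sq / 2"
  have b0: "\<beta> \<ge> 0" unfolding \<beta>_def using d sq by simp
  have MMp: "MM t > 0" using t1 pos by (intro MM_pos) auto
  have MMe: "MM t = Max (col_sqnorm m Y ` {..<t})" using t1 by (intro MM_eq) auto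
  have ipY: "ip m (\<lambda>k. Y k t) (\<lambda>k. Y k t) = sq" unfolding sq_def sqnorm_ip ..
  have sub: "{x. snd (snd x) \<and> \<not> okk (fst x) t} \<subseteq> {x. snd (snd x) \<and> \<bar>ip m (\<lambda>k. Y k t) (fst x)\<bar> > \<beta>}"
  proof safe
    fix u qs and b :: bool
    assume nok: "\<not> okk u t"
    define I where "I = ip m (\<lambda>k. Y k t) u"
    have "\<bar>w t + I / sq\<bar> > real K * \<delta>"
      using nok unfolding okk_def zval_def I_def ip_def sq_def by simp
    hence "\<bar>I / sq\<bar> > real K * \<delta> / 2" using wb by linarith
    hence "\<bar>I\<bar> / sq > real K * \<delta> / 2" using sq by simp
    hence "\<bar>I\<bar> > real K * \<delta> / 2 * sq" using sq by (simp add: field_simps)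
    thus "\<beta> < \<bar>ip m (\<lambda>k. Y k t) u\<bar>" unfolding I_def \<beta>_def by (simp add: field_simps)
  qed
  define a where "a = (real K)\<^sup>2 * sq / (8 * pi * MM t)"
  have ex: "2 * \<beta>\<^sup>2 / (\<delta>\<^sup>2 * MM t * sq) = 4 * pi * a"
  proof -
    have "2 * \<beta>\<^sup>2 / (\<delta>\<^sup>2 * MM t * sq) = (real K)\<^sup>2 * sq / (2 * MM t)"
      unfolding \<beta>_def power_mult_distrib power2_eq_square using d sq MMp
      by (simp add: divide_simps)
    also have "\<dots> = 4 * pi * a" unfolding a_def using MMp pi_gt_zero
      by (simp add: divide_simps)
    finally show ?thesis .
  qed
  have "exp (- a) < exp (- (ln 2 / 2))"
  proof -
    have s1: "- ((real K)\<^sup>2 * col_sqnorm m Y t) / (8 * pi * Max (col_sqnorm m Y ` {..<t})) = - a"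
      unfolding a_def MMe sq_def by (rule minus_divide_left[symmetric])
    have "sqrt 2 * exp (- a) < 1" using small unfolding s1 .
    hence "exp (- a) * sqrt 2 < 1" by (simp only: mult.commute)
    hence "exp (- a) < 1 / sqrt 2" by (subst pos_less_divide_eq) auto
    thus ?thesis by (simp add: exp_half_ln2)
  qed
  hence aa: "a \<ge> ln 2 / 2" by simp
  have "emeasure (measure_pmf (run2 t)) {x. snd (snd x) \<and> \<not> okk (fst x) t}
      \<le> emeasure (measure_pmf (run2 t)) {x. snd (snd x) \<and> \<bar>ip m (\<lambda>k. Y k t) (fst x)\<bar> > \<beta>}"
    using sub by (intro emeasure_mono) auto
  also have "\<dots> \<le> ennreal (2 * exp (- (2 * \<beta>\<^sup>2 / (\<delta>\<^sup>2 * MM t * sq))))"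
    using chernoff2[OF d _ b0 MMp, where v="\<lambda>k. Y k t"] pos sq unfolding ipY by auto
  also have "\<dots> \<le> ennreal (sqrt 2 * exp (- a))"
    unfolding ex using alg1[OF aa] by (intro ennreal_leI) simp
  also have "- a = - ((real K)\<^sup>2 * col_sqnorm m Y t) / (8 * pi * Max (col_sqnorm m Y ` {..<t}))"
    unfolding a_def MMe sq_def by (rule minus_divide_left)
  finally show ?thesis .
qed


lemma qc_eq: "quantize_column m N Y K \<delta> w = map_pmf (\<lambda>x. fst (snd x)) (run2 N)"
  unfolding quantize_column_def run2_map[symmetric] map_pmf_comp
  by (simp add: case_prod_beta)

lemma sum_split0: "(N::nat) \<ge> 1 \<Longrightarrow> (\<Sum>t<N. g t) = g 0 + (\<Sum>t\<in>{1..<N}. g t)"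
proof -
  assume "N \<ge> 1"
  hence "0 < N" by simp
  thus ?thesis by (simp add: lessThan_atLeast0 sum.atLeast_Suc_lessThan)
qed

lemma sat_all:
  assumes d: "\<delta> > 0" and N1: "N \<ge> 1" and pos: "\<forall>t<N. col_sqnorm m Y t > 0"
    and wb: "\<forall>t<N. \<bar>w t\<bar> \<le> real K * \<delta> / 2"
    and small: "\<forall>t\<in>{1..<N}. sqrt 2 * exp (- ((real K)\<^sup>2 * col_sqnorm m Y t) / (8 * pi * Max (col_sqnorm m Y ` {..<t}))) < 1"
  shows "emeasure (measure_pmf (run2 N)) {x. \<not> snd (snd x)}
     \<le> ennreal (sqrt 2 * (\<Sum>t\<in>{1..<N}. exp (- ((real K)\<^sup>2 * col_sqnorm m Y t) / (8 * pi * Max (col_sqnorm m Y ` {..<t})))))"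
proof -
  have t0: "emeasure (measure_pmf (run2 0)) {x. snd (snd x) \<and> \<not> okk (fst x) 0} = 0"
  proof -
    have "okk (\<lambda>_. 0) 0" unfolding okk_def zval_def using wb N1 d by auto
    thus ?thesis by simp
  qed
  have "emeasure (measure_pmf (run2 N)) {x. \<not> snd (snd x)}
     \<le> (\<Sum>t<N. emeasure (measure_pmf (run2 t)) {x. snd (snd x) \<and> \<not> okk (fst x) t})"
    by (rule sat_bound)
  also have "\<dots> = (\<Sum>t\<in>{1..<N}. emeasure (measure_pmf (run2 t)) {x. snd (snd x) \<and> \<not> okk (fst x) t})"
    using sum_split0[OF N1, of "\<lambda>t. emeasure (measure_pmf (run2 t)) {x. snd (snd x) \<and> \<not> okk (fst x) t}"] t0
    by (simp only: add_0)
  also have "\<dots> \<le> (\<Sum>t\<in>{1..<N}. ennreal (sqrt 2 * exp (- ((real K)\<^sup>2 * col_sqnorm m Y t) / (8 * pi * Max (col_sqnorm m Y ` {..<t})))))"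
  proof (rule sum_mono)
    fix t assume t: "t \<in> {1..<N}"
    show "emeasure (measure_pmf (run2 t)) {x. snd (snd x) \<and> \<not> okk (fst x) t}
       \<le> ennreal (sqrt 2 * exp (- ((real K)\<^sup>2 * col_sqnorm m Y t) / (8 * pi * Max (col_sqnorm m Y ` {..<t}))))"
      using t pos wb small by (intro sat_term d) auto
  qed
  also have "\<dots> = ennreal (sqrt 2 * (\<Sum>t\<in>{1..<N}. exp (- ((real K)\<^sup>2 * col_sqnorm m Y t) / (8 * pi * Max (col_sqnorm m Y ` {..<t})))))"
    by (simp add: sum_distrib_left)
  finally show ?thesis .
qed


lemma ip_e: "k < m \<Longrightarrow> ip m (\<lambda>i. if i = k then 1 else 0) u = u k"
proof -
  assume k: "k < m"
  have h: "(\<lambda>i. (if i = k then 1 else 0) * u i) = (\<lambda>i. if i = k then u k else 0)" by auto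
  have "ip m (\<lambda>i. if i = k then 1 else 0) u = (\<Sum>i<m. if i = k then u k else 0)"
    unfolding ip_def h ..
  also have "\<dots> = u k" using k by (subst sum.delta) auto
  finally show ?thesis .
qed

lemma ip_ee: "k < m \<Longrightarrow> ip m (\<lambda>i. if i = k then 1 else 0) (\<lambda>i. if i = k then 1 else 0) = 1"
  by (simp add: ip_e)

lemma coord_all:
  assumes d: "\<delta> > 0" and N1: "N \<ge> 1" and pos: "\<forall>t<N. col_sqnorm m Y t > 0" and a0: "\<alpha> \<ge> 0"
  shows "emeasure (measure_pmf (run2 N)) {x. snd (snd x) \<and> (\<exists>k<m. \<bar>fst x k\<bar> > \<alpha>)}
     \<le> ennreal (real m * (2 * exp (- (2 * \<alpha>\<^sup>2 / (\<delta>\<^sup>2 * MM N * 1)))))"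
proof -
  have MMp: "MM N > 0" using N1 pos by (intro MM_pos) auto
  have eq: "{x. snd (snd x) \<and> (\<exists>k<m. \<bar>fst x k\<bar> > \<alpha>)} =
     (\<Union>k\<in>{..<m}. {x. snd (snd x) \<and> \<bar>ip m (\<lambda>i. if i = k then 1 else 0) (fst x)\<bar> > \<alpha>})"
    by (auto simp: ip_e)
  have "emeasure (measure_pmf (run2 N)) {x. snd (snd x) \<and> (\<exists>k<m. \<bar>fst x k\<bar> > \<alpha>)}
     \<le> (\<Sum>k<m. emeasure (measure_pmf (run2 N)) {x. snd (snd x) \<and> \<bar>ip m (\<lambda>i. if i = k then 1 else 0) (fst x)\<bar> > \<alpha>})"
    unfolding eq by (rule emeasure_subadditive_finite) auto
  also have "\<dots> \<le> (\<Sum>k<m. ennreal (2 * exp (- (2 * \<alpha>\<^sup>2 / (\<delta>\<^sup>2 * MM N * 1)))))"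
  proof (rule sum_mono)
    fix k assume k: "k \<in> {..<m}"
    show "emeasure (measure_pmf (run2 N)) {x. snd (snd x) \<and> \<bar>ip m (\<lambda>i. if i = k then 1 else 0) (fst x)\<bar> > \<alpha>}
        \<le> ennreal (2 * exp (- (2 * \<alpha>\<^sup>2 / (\<delta>\<^sup>2 * MM N * 1))))"
      using chernoff2[OF d pos a0 MMp, where v="\<lambda>i. if i = k then 1 else 0"] k by (simp add: ip_ee)
  qed
  also have "\<dots> = ennreal (real m * (2 * exp (- (2 * \<alpha>\<^sup>2 / (\<delta>\<^sup>2 * MM N * 1)))))"
    by (simp add: ennreal_mult ennreal_of_nat_eq_real_of_nat)
  finally show ?thesis .
qed


lemma column_bound:
  assumes d: "\<delta> > 0" and N2: "N \<ge> 2" and p3: "p \<ge> 3"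
    and pos: "\<forall>t<N. col_sqnorm m Y t > 0"
    and wb: "\<forall>t<N. \<bar>w t\<bar> \<le> real K * \<delta> / 2"
    and small: "\<forall>t\<in>{1..<N}. sqrt 2 * exp (- ((real K)\<^sup>2 * col_sqnorm m Y t) / (8 * pi * Max (col_sqnorm m Y ` {..<t}))) < 1"
  shows "emeasure (measure_pmf (quantize_column m N Y K \<delta> w))
     {q. sqrt (\<Sum>k<m. (\<Sum>t<N. Y k t * (w t - q ! t))\<^sup>2) > \<delta> * sqrt (2 * pi * real p * real m * ln (real N)) * sqrt (MM N)}
   \<le> ennreal (sqrt 2 * real m / real N ^ p
       + sqrt 2 * (\<Sum>t\<in>{1..<N}. exp (- ((real K)\<^sup>2 * col_sqnorm m Y t) / (8 * pi * Max (col_sqnorm m Y ` {..<t})))))"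
proof -
  have N1: "N \<ge> 1" using N2 by simp
  define L where "L = ln (real N)"
  have L: "L \<ge> ln 2" unfolding L_def using N2 by simp
  have L0: "L > 0" using L ln_gt_zero[of 2] by linarith
  have MMp: "MM N > 0" using N1 pos by (intro MM_pos) auto
  define \<alpha> where "\<alpha> = \<delta> * sqrt (MM N) * sqrt (2 * pi * real p * L)"
  have a0: "\<alpha> \<ge> 0" unfolding \<alpha>_def using d MMp L0 by simp
  define B where "B = {q. sqrt (\<Sum>k<m. (\<Sum>t<N. Y k t * (w t - q ! t))\<^sup>2) > \<delta> * sqrt (2 * pi * real p * real m * ln (real N)) * sqrt (MM N)}"
  define S where "S = (\<lambda>x::(nat \<Rightarrow> real) \<times> real list \<times> bool. fst (snd x))"
  have tgt: "\<delta> * sqrt (2 * pi * real p * real m * ln (real N)) * sqrt (MM N) = sqrt (real m) * \<alpha>"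
  proof -
    have "sqrt (2 * pi * real p * real m * ln (real N)) = sqrt (real m) * sqrt (2 * pi * real p * L)"
      unfolding L_def by (simp add: real_sqrt_mult[symmetric] algebra_simps)
    thus ?thesis unfolding \<alpha>_def by simp
  qed
  have sub: "S -` B \<inter> set_pmf (run2 N) \<subseteq> {x. \<not> snd (snd x)} \<union> {x. snd (snd x) \<and> (\<exists>k<m. \<bar>fst x k\<bar> > \<alpha>)}"
  proof
    fix x assume x: "x \<in> S -` B \<inter> set_pmf (run2 N)"
    obtain u qs b where xe: "x = (u, qs, b)" by (cases x) auto
    have uk: "(\<Sum>t<N. Y k t * (w t - qs ! t)) = u k" for k
      using run2_supp[of x N] x unfolding xe by (simp add: mult.commute)
    have bad: "sqrt (\<Sum>k<m. (u k)\<^sup>2) > sqrt (real m) * \<alpha>"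
      using x unfolding xe S_def B_def tgt by (simp add: uk)
    show "x \<in> {x. \<not> snd (snd x)} \<union> {x. snd (snd x) \<and> (\<exists>k<m. \<bar>fst x k\<bar> > \<alpha>)}"
    proof (rule ccontr)
      assume "x \<notin> {x. \<not> snd (snd x)} \<union> {x. snd (snd x) \<and> (\<exists>k<m. \<bar>fst x k\<bar> > \<alpha>)}"
      hence all: "\<forall>k<m. \<bar>u k\<bar> \<le> \<alpha>" unfolding xe by auto
      have "(\<Sum>k<m. (u k)\<^sup>2) \<le> (\<Sum>k<m. \<alpha>\<^sup>2)"
      proof (rule sum_mono)
        fix k assume "k \<in> {..<m}"
        hence "\<bar>u k\<bar> \<le> \<alpha>" using all by simp
        hence "\<bar>u k\<bar>\<^sup>2 \<le> \<alpha>\<^sup>2" by (intro power_mono) auto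
        thus "(u k)\<^sup>2 \<le> \<alpha>\<^sup>2" by simp
      qed
      hence "sqrt (\<Sum>k<m. (u k)\<^sup>2) \<le> sqrt (real m * \<alpha>\<^sup>2)" by simp
      also have "\<dots> = sqrt (real m) * \<alpha>" using a0 by (simp add: real_sqrt_mult)
      finally show False using bad by simp
    qed
  qed
  have "emeasure (measure_pmf (quantize_column m N Y K \<delta> w)) B = emeasure (measure_pmf (run2 N)) (S -` B \<inter> set_pmf (run2 N))"
    unfolding qc_eq S_def emeasure_map_pmf emeasure_Int_set_pmf ..
  also have "\<dots> \<le> emeasure (measure_pmf (run2 N)) ({x. \<not> snd (snd x)} \<union> {x. snd (snd x) \<and> (\<exists>k<m. \<bar>fst x k\<bar> > \<alpha>)})"
    using sub by (intro emeasure_mono) auto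
  also have "\<dots> \<le> emeasure (measure_pmf (run2 N)) {x. \<not> snd (snd x)} + emeasure (measure_pmf (run2 N)) {x. snd (snd x) \<and> (\<exists>k<m. \<bar>fst x k\<bar> > \<alpha>)}"
    by (rule emeasure_subadditive) auto
  also have "\<dots> \<le> ennreal (sqrt 2 * (\<Sum>t\<in>{1..<N}. exp (- ((real K)\<^sup>2 * col_sqnorm m Y t) / (8 * pi * Max (col_sqnorm m Y ` {..<t})))))
      + ennreal (real m * (2 * exp (- (2 * \<alpha>\<^sup>2 / (\<delta>\<^sup>2 * MM N * 1)))))"
    by (intro add_mono sat_all coord_all d N1 pos wb small a0)
  also have "real m * (2 * exp (- (2 * \<alpha>\<^sup>2 / (\<delta>\<^sup>2 * MM N * 1)))) \<le> sqrt 2 * real m / real N ^ p"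
  proof -
    have e: "2 * \<alpha>\<^sup>2 / (\<delta>\<^sup>2 * MM N * 1) = 4 * pi * (real p * L)"
      unfolding \<alpha>_def using d MMp L0 by (simp add: power_mult_distrib)
    have pl: "real p * L \<ge> ln 2 / 2"
    proof -
      have "real p * L \<ge> 1 * ln 2" using p3 L by (intro mult_mono) auto
      moreover have "ln (2::real) > 0" by simp
      ultimately show ?thesis by linarith
    qed
    have en: "exp (- (real p * L)) = 1 / real N ^ p"
    proof -
      have "exp (real p * L) = real N ^ p" unfolding L_def using N1
        by (simp add: ln_realpow[symmetric])
      thus ?thesis by (simp add: exp_minus inverse_eq_divide)
    qed
    have "2 * exp (- (2 * \<alpha>\<^sup>2 / (\<delta>\<^sup>2 * MM N * 1))) \<le> sqrt 2 * (1 / real N ^ p)"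
      unfolding e en[symmetric] by (rule alg1[OF pl])
    hence "real m * (2 * exp (- (2 * \<alpha>\<^sup>2 / (\<delta>\<^sup>2 * MM N * 1)))) \<le> real m * (sqrt 2 * (1 / real N ^ p))"
      by (intro mult_left_mono) auto
    thus ?thesis by (simp add: mult.commute)
  qed
  hence "ennreal (real m * (2 * exp (- (2 * \<alpha>\<^sup>2 / (\<delta>\<^sup>2 * MM N * 1))))) \<le> ennreal (sqrt 2 * real m / real N ^ p)"
    by (rule ennreal_leI)
  hence "ennreal (sqrt 2 * (\<Sum>t\<in>{1..<N}. exp (- ((real K)\<^sup>2 * col_sqnorm m Y t) / (8 * pi * Max (col_sqnorm m Y ` {..<t})))))
      + ennreal (real m * (2 * exp (- (2 * \<alpha>\<^sup>2 / (\<delta>\<^sup>2 * MM N * 1)))))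
      \<le> ennreal (sqrt 2 * (\<Sum>t\<in>{1..<N}. exp (- ((real K)\<^sup>2 * col_sqnorm m Y t) / (8 * pi * Max (col_sqnorm m Y ` {..<t})))))
      + ennreal (sqrt 2 * real m / real N ^ p)"
    by (rule add_left_mono)
  also have "\<dots> = ennreal (sqrt 2 * real m / real N ^ p
       + sqrt 2 * (\<Sum>t\<in>{1..<N}. exp (- ((real K)\<^sup>2 * col_sqnorm m Y t) / (8 * pi * Max (col_sqnorm m Y ` {..<t})))))"
    by (subst ennreal_plus[symmetric]) (auto intro!: sum_nonneg mult_nonneg_nonneg simp: add.commute simp del: minus_divide_left)
  finally show ?thesis unfolding B_def .
qed

end



lemma layer_len: "Q \<in> set_pmf (layer_run m N Y K \<delta> Wt n) \<Longrightarrow> length Q = n"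
proof (induction n arbitrary: Q)
  case 0 thus ?case by simp
next
  case (Suc n)
  from Suc.prems obtain Qs q where "Qs \<in> set_pmf (layer_run m N Y K \<delta> Wt n)" "Q = Qs @ [q]"
    by (auto simp only: layer_run.simps set_bind_pmf set_map_pmf)
  thus ?case using Suc.IH by simp
qed

lemma layer_union:
  "emeasure (measure_pmf (layer_run m N Y K \<delta> Wt n)) {Q. \<exists>j<n. bad j (Q ! j)}
    \<le> (\<Sum>j<n. emeasure (measure_pmf (quantize_column m N Y K \<delta> (\<lambda>t. Wt t j))) {q. bad j q})"
proof (induction n)
  case 0
  then show ?case by simp
next
  case (Suc n)
  define qc where "qc = quantize_column m N Y K \<delta> (\<lambda>t. Wt t n)"
  define A where "A = {Q. \<exists>j<n. bad j (Q ! j)}"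
  have G: "(\<integral>\<^sup>+q. indicator {Q. \<exists>j<Suc n. bad j (Q ! j)} (Qs @ [q]) \<partial>qc)
      \<le> indicator A Qs + emeasure (measure_pmf qc) {q. bad n q}"
    if Qs: "Qs \<in> set_pmf (layer_run m N Y K \<delta> Wt n)" for Qs
  proof -
    have l: "length Qs = n" using layer_len[OF Qs] .
    have "(\<integral>\<^sup>+q. indicator {Q. \<exists>j<Suc n. bad j (Q ! j)} (Qs @ [q]) \<partial>qc)
        \<le> (\<integral>\<^sup>+q. indicator A Qs + indicator {q. bad n q} q \<partial>qc)"
    proof (rule nn_integral_mono)
      fix q
      have e1: "(Qs @ [q]) ! j = Qs ! j" if "j < n" for j using l that by (simp add: nth_append)
      have e2: "(Qs @ [q]) ! n = q" using l nth_append_length by metis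
      have iff: "(\<exists>j<Suc n. bad j ((Qs @ [q]) ! j)) \<longleftrightarrow> (\<exists>j<n. bad j (Qs ! j)) \<or> bad n q"
      proof
        assume "\<exists>j<Suc n. bad j ((Qs @ [q]) ! j)"
        then obtain j where j: "j < Suc n" "bad j ((Qs @ [q]) ! j)" by blast
        show "(\<exists>j<n. bad j (Qs ! j)) \<or> bad n q"
        proof (cases "j < n")
          case True thus ?thesis using j e1 by metis
        next
          case False hence "j = n" using j(1) by simp
          thus ?thesis using j e2 by simp
        qed
      next
        assume "(\<exists>j<n. bad j (Qs ! j)) \<or> bad n q"
        thus "\<exists>j<Suc n. bad j ((Qs @ [q]) ! j)"
        proof
          assume "\<exists>j<n. bad j (Qs ! j)"
          then obtain j where "j < n" "bad j (Qs ! j)" by blast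
          thus ?thesis using e1 less_SucI by metis
        next
          assume "bad n q" thus ?thesis using e2 lessI by metis
        qed
      qed
      show "indicator {Q. \<exists>j<Suc n. bad j (Q ! j)} (Qs @ [q]) \<le> (indicator A Qs + indicator {q. bad n q} q :: ennreal)"
        unfolding indicator_def A_def mem_Collect_eq iff by (auto intro: add_increasing add_increasing2)
    qed
    also have "\<dots> = indicator A Qs + emeasure (measure_pmf qc) {q. bad n q}"
      by (subst nn_integral_add) (auto simp: measure_pmf.emeasure_space_1)
    finally show ?thesis .
  qed
  have "emeasure (measure_pmf (layer_run m N Y K \<delta> Wt (Suc n))) {Q. \<exists>j<Suc n. bad j (Q ! j)}
      = (\<integral>\<^sup>+Qs. (\<integral>\<^sup>+q. indicator {Q. \<exists>j<Suc n. bad j (Q ! j)} (Qs @ [q]) \<partial>qc) \<partial>layer_run m N Y K \<delta> Wt n)"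
    apply (subst nn_integral_indicator[symmetric])
     apply simp
    unfolding qc_def layer_run.simps nn_integral_bind_pmf nn_integral_map_pmf ..
  also have "\<dots> \<le> (\<integral>\<^sup>+Qs. indicator A Qs + emeasure (measure_pmf qc) {q. bad n q} \<partial>layer_run m N Y K \<delta> Wt n)"
    by (intro nn_integral_mono_AE) (auto simp: AE_measure_pmf_iff G)
  also have "\<dots> = emeasure (measure_pmf (layer_run m N Y K \<delta> Wt n)) A + emeasure (measure_pmf qc) {q. bad n q}"
    by (subst nn_integral_add) (auto simp: measure_pmf.emeasure_space_1)
  also have "\<dots> \<le> (\<Sum>j<Suc n. emeasure (measure_pmf (quantize_column m N Y K \<delta> (\<lambda>t. Wt t j))) {q. bad j q})"
    using Suc.IH unfolding A_def qc_def by (simp add: add_right_mono)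
  finally show ?case .
qed




theorem mainTheorem7:
  fixes m N N' p K :: nat and \<delta> :: real and X Xt W Wt :: "nat \<Rightarrow> nat \<Rightarrow> real"
  assumes "m \<ge> 1" and "N \<ge> 1" and "N' \<ge> 1" and "p \<ge> 3" and "\<delta> > 0"
    and "\<forall>t<N. \<exists>k<m. Xt k t \<noteq> 0"
    and "\<forall>j<N'. is_aligned m N X Xt (\<lambda>t. W t j) (\<lambda>t. Wt t j)"
    and "Max ((\<lambda>(t, j). \<bar>Wt t j\<bar>) ` ({..<N} \<times> {..<N'})) \<le> real K * \<delta> / 2"
  shows "measure_pmf.prob (layer_run m N Xt K \<delta> Wt N')
           {Q. Max ((\<lambda>j. sqrt (\<Sum>k<m. ((\<Sum>t<N. X k t * W t j) - (\<Sum>t<N. Xt k t * (Q ! j ! t)))\<^sup>2))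
                    ` {..<N'})
               \<le> \<delta> * sqrt (2 * pi * real p * real m * ln (real N)) * Max ((\<lambda>j. col_norm m Xt j) ` {..<N})}
         \<ge> 1 - sqrt 2 * real m * real N' / real N ^ p
             - sqrt 2 * real N' * (\<Sum>t\<in>{1..<N}.
                 exp (- ((real K)\<^sup>2 * col_sqnorm m Xt t)
                        / (8 * pi * Max ((\<lambda>j. col_sqnorm m Xt j) ` {..<t}))))"
    (is "?P \<ge> ?R")
proof -
  note m1 = assms(1) and N1 = assms(2) and N'1 = assms(3) and p3 = assms(4) and d = assms(5)
  define S where "S = (\<Sum>t\<in>{1..<N}. exp (- ((real K)\<^sup>2 * col_sqnorm m Xt t)
                        / (8 * pi * Max ((\<lambda>j. col_sqnorm m Xt j) ` {..<t}))))"
  have S0: "S \<ge> 0" unfolding S_def by (intro sum_nonneg) simp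
  have P0: "?P \<ge> 0" by simp
  have pos: "\<forall>t<N. col_sqnorm m Xt t > 0"
  proof safe
    fix t assume t: "t < N"
    then obtain k where k: "k < m" "Xt k t \<noteq> 0" using assms(6) by blast
    have "(Xt k t)\<^sup>2 \<le> col_sqnorm m Xt t" unfolding col_sqnorm_def
      using k by (intro member_le_sum) auto
    moreover have "(Xt k t)\<^sup>2 > 0" using k by simp
    ultimately show "col_sqnorm m Xt t > 0" by linarith
  qed
  show ?thesis
  proof (cases "N = 1")
    case True
    have "1 * 1 \<le> real m * real N'" using m1 N'1 by (intro mult_mono) auto
    hence "sqrt 2 * 1 \<le> sqrt 2 * (real m * real N')"
      by (intro mult_left_mono) auto
    hence "?R \<le> 1 - sqrt 2" using True by (simp add: mult.assoc)
    also have "\<dots> \<le> 0" by simp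
    finally show ?thesis using P0 by linarith
  next
    case False
    hence N2: "N \<ge> 2" using N1 by simp
    show ?thesis
    proof (cases "\<forall>t\<in>{1..<N}. sqrt 2 * exp (- ((real K)\<^sup>2 * col_sqnorm m Xt t) / (8 * pi * Max (col_sqnorm m Xt ` {..<t}))) < 1")
      case False
      then obtain t where t: "t \<in> {1..<N}"
        and big: "sqrt 2 * exp (- ((real K)\<^sup>2 * col_sqnorm m Xt t) / (8 * pi * Max (col_sqnorm m Xt ` {..<t}))) \<ge> 1"
        by (auto simp: not_less)
      have "exp (- ((real K)\<^sup>2 * col_sqnorm m Xt t) / (8 * pi * Max (col_sqnorm m Xt ` {..<t}))) \<le> S"
        unfolding S_def using t by (intro member_le_sum) auto
      hence "1 \<le> sqrt 2 * S" using big by (smt (verit) mult_left_mono real_sqrt_ge_zero)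
      hence "1 * 1 \<le> real N' * (sqrt 2 * S)" using N'1 by (intro mult_mono) auto
      moreover have "sqrt 2 * real m * real N' / real N ^ p \<ge> 0" by simp
      moreover have "?R = 1 - sqrt 2 * real m * real N' / real N ^ p - real N' * (sqrt 2 * S)"
        unfolding S_def by (simp add: mult.assoc mult.left_commute)
      ultimately have "?R \<le> 0" by linarith
      thus ?thesis using P0 by linarith
    next
      case small: True
      define bound where "bound = \<delta> * sqrt (2 * pi * real p * real m * ln (real N)) * sqrt (MM m Xt N)"
      define bad where "bad = (\<lambda>j q. sqrt (\<Sum>k<m. (\<Sum>t<N. Xt k t * (Wt t j - q ! t))\<^sup>2) > bound)"
      define C where "C = sqrt 2 * real m / real N ^ p + sqrt 2 * S"
      have C0: "C \<ge> 0" unfolding C_def using S0 by simp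
      have col: "emeasure (measure_pmf (quantize_column m N Xt K \<delta> (\<lambda>t. Wt t j))) {q. bad j q} \<le> ennreal C"
        if j: "j < N'" for j
      proof -
        have wb: "\<forall>t<N. \<bar>Wt t j\<bar> \<le> real K * \<delta> / 2"
        proof safe
          fix t assume t: "t < N"
          have "\<bar>Wt t j\<bar> \<le> Max ((\<lambda>(t, j). \<bar>Wt t j\<bar>) ` ({..<N} \<times> {..<N'}))"
            using t j by (intro Max_ge) auto
          thus "\<bar>Wt t j\<bar> \<le> real K * \<delta> / 2" using assms(8) by linarith
        qed
        show ?thesis
          using column_bound[where m=m and Y=Xt and K=K and \<delta>=\<delta> and w="\<lambda>t. Wt t j" and N=N and p=p,
                OF d N2 p3 pos _ small] wb
          unfolding bad_def bound_def C_def S_def by simp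
      qed
      define F where "F = {Q. \<exists>j<N'. bad j (Q ! j)}"
      have "emeasure (measure_pmf (layer_run m N Xt K \<delta> Wt N')) F
          \<le> (\<Sum>j<N'. emeasure (measure_pmf (quantize_column m N Xt K \<delta> (\<lambda>t. Wt t j))) {q. bad j q})"
        unfolding F_def by (rule layer_union)
      also have "\<dots> \<le> (\<Sum>j<N'. ennreal C)" by (intro sum_mono col) auto
      also have "\<dots> = ennreal (real N' * C)" using C0 by (simp add: ennreal_mult ennreal_of_nat_eq_real_of_nat)
      finally have PF: "measure_pmf.prob (layer_run m N Xt K \<delta> Wt N') F \<le> real N' * C"
        using C0 by (simp add: measure_pmf.emeasure_eq_measure)
      define E where "E = {Q. Max ((\<lambda>j. sqrt (\<Sum>k<m. ((\<Sum>t<N. X k t * W t j) - (\<Sum>t<N. Xt k t * (Q ! j ! t)))\<^sup>2))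
                    ` {..<N'})
               \<le> \<delta> * sqrt (2 * pi * real p * real m * ln (real N)) * Max ((\<lambda>j. col_norm m Xt j) ` {..<N})}"
      have Mx: "Max ((\<lambda>j. col_norm m Xt j) ` {..<N}) = sqrt (MM m Xt N)"
      proof -
        have "sqrt (Max (col_sqnorm m Xt ` {..<N})) = Max (sqrt ` (col_sqnorm m Xt ` {..<N}))"
          using N1 by (intro mono_Max_commute) (auto simp: mono_def lessThan_empty_iff)
        thus ?thesis using MM_eq[of N m Xt] N1 unfolding col_norm_def image_image by simp
      qed
      have comp: "UNIV - E \<subseteq> F"
      proof
        fix Q assume Q: "Q \<in> UNIV - E"
        show "Q \<in> F"
        proof (rule ccontr)
          assume "Q \<notin> F"
          hence nb: "\<forall>j<N'. \<not> bad j (Q ! j)" unfolding F_def by auto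
          have "\<forall>j<N'. sqrt (\<Sum>k<m. ((\<Sum>t<N. X k t * W t j) - (\<Sum>t<N. Xt k t * (Q ! j ! t)))\<^sup>2) \<le> bound"
          proof safe
            fix j assume j: "j < N'"
            have al: "\<forall>k<m. (\<Sum>t<N. Xt k t * Wt t j) = (\<Sum>t<N. X k t * W t j)"
              using assms(7) j unfolding is_aligned_def by blast
            have "(\<Sum>k<m. ((\<Sum>t<N. X k t * W t j) - (\<Sum>t<N. Xt k t * (Q ! j ! t)))\<^sup>2)
                = (\<Sum>k<m. (\<Sum>t<N. Xt k t * (Wt t j - Q ! j ! t))\<^sup>2)"
            proof (rule sum.cong[OF refl])
              fix k assume "k \<in> {..<m}"
              hence "(\<Sum>t<N. X k t * W t j) = (\<Sum>t<N. Xt k t * Wt t j)" using al by simp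
              thus "((\<Sum>t<N. X k t * W t j) - (\<Sum>t<N. Xt k t * (Q ! j ! t)))\<^sup>2
                  = (\<Sum>t<N. Xt k t * (Wt t j - Q ! j ! t))\<^sup>2"
                by (simp add: sum_subtractf right_diff_distrib)
            qed
            thus "sqrt (\<Sum>k<m. ((\<Sum>t<N. X k t * W t j) - (\<Sum>t<N. Xt k t * (Q ! j ! t)))\<^sup>2) \<le> bound"
              using nb j unfolding bad_def by (simp add: not_less)
          qed
          hence "Q \<in> E" unfolding E_def Mx bound_def[symmetric] using N'1
            by (subst Max_le_iff) (auto simp: lessThan_empty_iff)
          thus False using Q by simp
        qed
      qed
      have "measure_pmf.prob (layer_run m N Xt K \<delta> Wt N') (UNIV - E) \<le> measure_pmf.prob (layer_run m N Xt K \<delta> Wt N') F"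
        using comp by (intro measure_pmf.finite_measure_mono) auto
      moreover have "measure_pmf.prob (layer_run m N Xt K \<delta> Wt N') (UNIV - E) = 1 - measure_pmf.prob (layer_run m N Xt K \<delta> Wt N') E"
        using measure_pmf.prob_compl[of E "layer_run m N Xt K \<delta> Wt N'"] by simp
      moreover have "?R = 1 - real N' * C" unfolding C_def S_def by (simp add: algebra_simps)
      ultimately show ?thesis using PF unfolding E_def by linarith
    qed
  qed
qed


end
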